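(* Let $(G,D,\star)$ be a probabilistic metric space with $\star$ continuous. Let $f,g\in\Pi(G)$ and let $(a_n),(b_n)\subset G$ be any Cauchy sequences such that $D(a_n,x)\xrightarrow{w}f(x)$ and $D(b_n,x)\xrightarrow{w}g(x)$ for all $x\in G$. Then the weak limit $\lim_{n,m\to\infty}D(a_n,b_m)$ exists, does not depend on the choice of the sequences $(a_n),(b_n)$, and $$\sup_{x\in G}f(x)\star g(x)=\lim_{n,m}D(a_n,b_m)=\lim_n D(a_n,b_n)=\lim_m f(b_m)=\lim_n g(a_n),$$ all limits being weak limits in $\Delta^+$.
   Context: A distribution function is a nondecreasing, left-continuous function $F:[-\infty,+\infty]\to[0,1]$ with $F(-\infty)=0$, $F(+\infty)=1$; $\Delta^+$ is the set of distribution functions with $F(0)=0$, ordered pointwise (a complete lattice with maximum $\mathcal H_0$, $\mathcal H_0(t)=0$ for $t\le0$, $1$ for $t>0$). A triangle function is a binary operation $\star$ on $\Delta^+$ that is commutative, associative, nondecreasing in each argument, with $F\star\mathcal H_0=F$. $F_n\xrightarrow{w}F$ means $F_n(t)\to F(t)$ at every continuity point $t\in\mathbb R$ of $F$; $\star$ is continuous if $F_n\star L_n\xrightarrow{w}F\star L$ whenever $F_n\xrightarrow{w}F$, $L_n\xrightarrow{w}L$. A probabilistic metric space $(G,D,\star)$ consists of a set $G$, a triangle function $\star$ and $D:G\times G\to\Delta^+$ with (i) $D(p,q)=\mathcal H_0$ iff $p=q$; (ii) $D(p,q)=D(q,p)$; (iii) $D(p,q)\star D(q,r)\le D(p,r)$.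 A sequence $(z_n)\subset G$ is Cauchy if $D(z_n,z_p)\xrightarrow{w}\mathcal H_0$ as $n,p\to\infty$. A map $f:G\to\Delta^+$ is probabilistic $1$-Lipschitz if $D(x,y)\star f(y)\le f(x)$ for all $x,y$. $\Pi(G)$ is the set of probabilistic $1$-Lipschitz maps $f$ for which there is a Cauchy sequence $(a_n)\subset G$ with $D(a_n,x)\xrightarrow{w}f(x)$ for all $x\in G$. *)

theory Defs
  imports "HOL-Analysis.Analysis"
begin

type_synonym dfun = "ereal \<Rightarrow> real"

definition distfun :: "dfun \<Rightarrow> bool" where
  "distfun F \<longleftrightarrow> mono F \<and> (\<forall>t. 0 \<le> F t \<and> F t \<le> 1)
     \<and> (\<forall>x::real. ((\<lambda>s. F (ereal s)) \<longlongrightarrow> F (ereal x)) (at_left x))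
     \<and> F (-\<infinity>) = 0 \<and> F \<infinity> = 1"

definition Dplus :: "dfun \<Rightarrow> bool" where
  "Dplus F \<longleftrightarrow> distfun F \<and> F 0 = 0"

definition H0 :: dfun where
  "H0 t = (if t \<le> 0 then 0 else 1)"

definition wconv :: "('i \<Rightarrow> dfun) \<Rightarrow> dfun \<Rightarrow> 'i filter \<Rightarrow> bool" where
  "wconv Fs F net \<longleftrightarrow> (\<forall>t::real. isCont (\<lambda>s. F (ereal s)) t \<longrightarrow>
      ((\<lambda>i. Fs i (ereal t)) \<longlongrightarrow> F (ereal t)) net)"

definition triangle_function :: "(dfun \<Rightarrow> dfun \<Rightarrow> dfun) \<Rightarrow> bool" where
  "triangle_function star \<longleftrightarrow>
     (\<forall>F L. Dplus F \<and> Dplus L \<longrightarrow> Dplus (star F L))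
   \<and> (\<forall>F L. Dplus F \<and> Dplus L \<longrightarrow> star F L = star L F)
   \<and> (\<forall>F L K. Dplus F \<and> Dplus L \<and> Dplus K \<longrightarrow> star (star F L) K = star F (star L K))
   \<and> (\<forall>F F' L. Dplus F \<and> Dplus F' \<and> Dplus L \<and> F \<le> F' \<longrightarrow> star F L \<le> star F' L)
   \<and> (\<forall>F. Dplus F \<longrightarrow> star F H0 = F)"

definition continuous_tf :: "(dfun \<Rightarrow> dfun \<Rightarrow> dfun) \<Rightarrow> bool" where
  "continuous_tf star \<longleftrightarrow>
     (\<forall>Fs Ls F L. (\<forall>n. Dplus (Fs n)) \<and> (\<forall>n. Dplus (Ls n)) \<and> Dplus F \<and> Dplus L
        \<and> wconv Fs F sequentially \<and> wconv Ls L sequentially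
        \<longrightarrow> wconv (\<lambda>n. star (Fs n) (Ls n)) (star F L) sequentially)"

definition pms :: "'a set \<Rightarrow> ('a \<Rightarrow> 'a \<Rightarrow> dfun) \<Rightarrow> (dfun \<Rightarrow> dfun \<Rightarrow> dfun) \<Rightarrow> bool" where
  "pms G D star \<longleftrightarrow> triangle_function star
     \<and> (\<forall>p\<in>G. \<forall>q\<in>G. Dplus (D p q))
     \<and> (\<forall>p\<in>G. \<forall>q\<in>G. D p q = H0 \<longleftrightarrow> p = q)
     \<and> (\<forall>p\<in>G. \<forall>q\<in>G. D p q = D q p)
     \<and> (\<forall>p\<in>G. \<forall>q\<in>G. \<forall>r\<in>G. star (D p q) (D q r) \<le> D p r)"

definition pm_cauchy :: "'a set \<Rightarrow> ('a \<Rightarrow> 'a \<Rightarrow> dfun) \<Rightarrow> (nat \<Rightarrow> 'a) \<Rightarrow> bool" where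
  "pm_cauchy G D z \<longleftrightarrow> (\<forall>n. z n \<in> G)
     \<and> wconv (\<lambda>(n, p). D (z n) (z p)) H0 (sequentially \<times>\<^sub>F sequentially)"

definition prob_lip1 :: "'a set \<Rightarrow> ('a \<Rightarrow> 'a \<Rightarrow> dfun) \<Rightarrow> (dfun \<Rightarrow> dfun \<Rightarrow> dfun)
    \<Rightarrow> ('a \<Rightarrow> dfun) \<Rightarrow> bool" where
  "prob_lip1 G D star f \<longleftrightarrow> (\<forall>x\<in>G. Dplus (f x))
     \<and> (\<forall>x\<in>G. \<forall>y\<in>G. star (D x y) (f y) \<le> f x)"

definition PiG :: "'a set \<Rightarrow> ('a \<Rightarrow> 'a \<Rightarrow> dfun) \<Rightarrow> (dfun \<Rightarrow> dfun \<Rightarrow> dfun)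
    \<Rightarrow> ('a \<Rightarrow> dfun) \<Rightarrow> bool" where
  "PiG G D star f \<longleftrightarrow> prob_lip1 G D star f
     \<and> (\<exists>a. pm_cauchy G D a \<and> (\<forall>x\<in>G. wconv (\<lambda>n. D (a n) x) (f x) sequentially))"

definition is_Dsup :: "dfun set \<Rightarrow> dfun \<Rightarrow> bool" where
  "is_Dsup S L \<longleftrightarrow> Dplus L \<and> (\<forall>F\<in>S. F \<le> L)
     \<and> (\<forall>U. Dplus U \<and> (\<forall>F\<in>S. F \<le> U) \<longrightarrow> L \<le> U)"

end

theory Submission
  imports Defs "HOL-Probability.Helly_Selection"
begin

lemma dplusD:
  assumes "Dplus F"
  shows "mono F" "\<And>t. 0 \<le> F t" "\<And>t. F t \<le> 1" "\<And>t. t \<le> 0 \<Longrightarrow> F t = 0"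
    "\<And>x::real. ((\<lambda>s. F (ereal s)) \<longlongrightarrow> F (ereal x)) (at_left x)"
    "F \<infinity> = 1" "F (-\<infinity>) = 0" "mono (\<lambda>s::real. F (ereal s))"
proof -
  show m: "mono F" using assms by (simp add: Dplus_def distfun_def)
  show "\<And>t. 0 \<le> F t" "\<And>t. F t \<le> 1" "\<And>x::real. ((\<lambda>s. F (ereal s)) \<longlongrightarrow> F (ereal x)) (at_left x)"
    "F \<infinity> = 1" "F (-\<infinity>) = 0" using assms by (auto simp add: Dplus_def distfun_def)
  show "\<And>t. t \<le> 0 \<Longrightarrow> F t = 0"
  proof -
    fix t :: ereal assume "t \<le> 0"
    then have "F t \<le> F 0" using m by (simp add: monoD)
    moreover have "F 0 = 0" "0 \<le> F t" using assms by (auto simp add: Dplus_def distfun_def)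
    ultimately show "F t = 0" by simp
  qed
  show "mono (\<lambda>s::real. F (ereal s))" using m by (auto simp: mono_def)
qed

lemma cpt2:
  assumes "mono (f::real\<Rightarrow>real)" "mono (g::real\<Rightarrow>real)" "a < b"
  shows "\<exists>s. a < s \<and> s < b \<and> isCont f s \<and> isCont g s"
proof -
  have "countable ({x. \<not> isCont f x} \<union> {x. \<not> isCont g x})"
    using mono_ctble_discont[OF assms(1)] mono_ctble_discont[OF assms(2)] by auto
  from open_minus_countable[OF this, of "{a<..<b}"] assms(3) show ?thesis by auto
qed

lemma Dplus_H0: "Dplus H0"
proof -
  have "((\<lambda>s. H0 (ereal s)) \<longlongrightarrow> H0 (ereal x)) (at_left x)" for x
  proof (cases "x \<le> 0")
    case True
    have "eventually (\<lambda>s. s \<in> {x-1<..<x}) (at_left x)"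
      by (intro eventually_at_left_real) simp
    then have "eventually (\<lambda>s. H0 (ereal s) = H0 (ereal x)) (at_left x)"
      by (rule eventually_mono) (use True in \<open>auto simp: H0_def\<close>)
    then show ?thesis by (rule tendsto_eventually)
  next
    case False
    have "eventually (\<lambda>s. s \<in> {0<..<x}) (at_left x)"
      using False by (intro eventually_at_left_real) simp
    then have "eventually (\<lambda>s. H0 (ereal s) = H0 (ereal x)) (at_left x)"
      by (rule eventually_mono) (use False in \<open>auto simp: H0_def\<close>)
    then show ?thesis by (rule tendsto_eventually)
  qed
  moreover have "mono H0" by (auto simp: mono_def H0_def)
  ultimately show ?thesis by (auto simp: Dplus_def distfun_def H0_def)
qed

lemma wconv_le:
  assumes F: "Dplus F" and H: "Dplus H" and cF: "wconv Fs F net" and cH: "wconv Hs H net"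
    and nb: "net \<noteq> bot" and le: "\<And>i. Fs i \<le> Hs i"
  shows "F \<le> H"
proof (rule le_funI)
  fix t :: ereal
  show "F t \<le> H t"
  proof (cases t)
    case (real x)
    show ?thesis
    proof (rule ccontr)
      assume "\<not> F t \<le> H t"
      then have lt: "H (ereal x) < F (ereal x)" using real by simp
      from order_tendstoD(1)[OF dplusD(5)[OF F, of x] lt]
      have "eventually (\<lambda>s. H (ereal x) < F (ereal s)) (at_left x)" .
      then obtain b where b: "b < x" "\<And>z. b < z \<Longrightarrow> z < x \<Longrightarrow> H (ereal x) < F (ereal z)"
        by (auto simp: eventually_at_left[of "x - 1" x])
      obtain s where s: "b < s" "s < x" "isCont (\<lambda>s. F (ereal s)) s" "isCont (\<lambda>s. H (ereal s)) s"
        using cpt2[OF dplusD(8)[OF F] dplusD(8)[OF H] b(1)] by blast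
      have l1: "((\<lambda>i. Fs i (ereal s)) \<longlongrightarrow> F (ereal s)) net" using cF s(3) by (simp add: wconv_def)
      have l2: "((\<lambda>i. Hs i (ereal s)) \<longlongrightarrow> H (ereal s)) net" using cH s(4) by (simp add: wconv_def)
      have "F (ereal s) \<le> H (ereal s)"
        by (rule tendsto_le[OF nb l2 l1]) (auto simp: le le_funD)
      moreover have "H (ereal s) \<le> H (ereal x)" using dplusD(1)[OF H] s(2) by (simp add: monoD)
      moreover have "H (ereal x) < F (ereal s)" using b(2) s by simp
      ultimately show False by simp
    qed
  next
    case PInf then show ?thesis using dplusD(6)[OF F] dplusD(6)[OF H] by simp
  next
    case MInf then show ?thesis using dplusD(7)[OF F] dplusD(7)[OF H] by simp
  qed
qed

lemma wconv_unique:
  assumes "Dplus F" "Dplus H" "wconv Fs F net" "wconv Fs H net" "net \<noteq> bot"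
  shows "F = H"
  using wconv_le[OF assms(1,2,3,4,5)] wconv_le[OF assms(2,1,4,3,5)] by (auto intro: antisym)

lemma wconv_compose:
  assumes "wconv X L F" "filterlim q F G"
  shows "wconv (\<lambda>k. X (q k)) L G"
  unfolding wconv_def
proof (intro allI impI)
  fix t assume "isCont (\<lambda>s. L (ereal s)) t"
  then have "((\<lambda>i. X i (ereal t)) \<longlongrightarrow> L (ereal t)) F" using assms(1) by (simp add: wconv_def)
  from filterlim_compose[OF this assms(2)] show "((\<lambda>k. X (q k) (ereal t)) \<longlongrightarrow> L (ereal t)) G" .
qed

definition tends2 :: "(nat \<Rightarrow> nat \<times> nat) \<Rightarrow> bool" where
  "tends2 q \<longleftrightarrow> (\<forall>N. \<exists>K. \<forall>k\<ge>K. N \<le> fst (q k) \<and> N \<le> snd (q k))"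

lemma tends2_filterlim:
  assumes "tends2 q" shows "filterlim q (sequentially \<times>\<^sub>F sequentially) sequentially"
  unfolding filterlim_def le_filter_def eventually_filtermap
proof (intro allI impI)
  fix P assume "eventually P (sequentially \<times>\<^sub>F sequentially)"
  then obtain N where N: "\<And>m n. m \<ge> N \<Longrightarrow> n \<ge> N \<Longrightarrow> P (n, m)"
    by (auto simp: eventually_prod_sequentially)
  obtain K where K: "\<And>k. k \<ge> K \<Longrightarrow> N \<le> fst (q k) \<and> N \<le> snd (q k)"
    using assms by (auto simp: tends2_def)
  show "eventually (\<lambda>k. P (q k)) sequentially"
    unfolding eventually_sequentially
  proof (intro exI allI impI)
    fix k assume "K \<le> k"
    then have "N \<le> fst (q k)" "N \<le> snd (q k)" using K by auto
    then have "P (fst (q k), snd (q k))" using N by blast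
    then show "P (q k)" by simp
  qed
qed

lemma tends2_subseq:
  assumes "tends2 q" "strict_mono r" shows "tends2 (\<lambda>k. q (r k))"
  unfolding tends2_def
proof
  fix N
  obtain K where K: "\<And>k. k \<ge> K \<Longrightarrow> N \<le> fst (q k) \<and> N \<le> snd (q k)"
    using assms by (auto simp: tends2_def)
  have "\<forall>k\<ge>K. N \<le> fst (q (r k)) \<and> N \<le> snd (q (r k))"
  proof (intro allI impI)
    fix k assume "K \<le> k"
    then have "K \<le> r k" using seq_suble[OF assms(2), of k] by linarith
    then show "N \<le> fst (q (r k)) \<and> N \<le> snd (q (r k))" using K by blast
  qed
  then show "\<exists>K. \<forall>k\<ge>K. N \<le> fst (q (r k)) \<and> N \<le> snd (q (r k))" by blast
qed

lemma tends2_diag: "strict_mono r \<Longrightarrow> tends2 (\<lambda>k. (r k, r k))"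
  unfolding tends2_def
proof
  fix N assume "strict_mono r"
  then have "\<forall>k\<ge>N. N \<le> r k" using seq_suble order_trans by blast
  then show "\<exists>K. \<forall>k\<ge>K. N \<le> fst (r k, r k) \<and> N \<le> snd (r k, r k)" by auto
qed

lemma tends2_diag0: "tends2 (\<lambda>k. (k, k))"
  unfolding tends2_def by auto

lemma tends2_swap: "tends2 q \<Longrightarrow> tends2 (\<lambda>k. (snd (q k), fst (q k)))"
  unfolding tends2_def by (simp add: conj_commute)

lemma tends2_mix: "tends2 p \<Longrightarrow> tends2 q \<Longrightarrow> tends2 (\<lambda>k. (fst (p k), fst (q k)))"
  unfolding tends2_def
proof
  fix N assume a: "\<forall>N. \<exists>K. \<forall>k\<ge>K. N \<le> fst (p k) \<and> N \<le> snd (p k)"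
    "\<forall>N. \<exists>K. \<forall>k\<ge>K. N \<le> fst (q k) \<and> N \<le> snd (q k)"
  obtain K1 where K1: "\<forall>k\<ge>K1. N \<le> fst (p k)" using a(1) by blast
  obtain K2 where K2: "\<forall>k\<ge>K2. N \<le> fst (q k)" using a(2) by blast
  show "\<exists>K. \<forall>k\<ge>K. N \<le> fst (fst (p k), fst (q k)) \<and> N \<le> snd (fst (p k), fst (q k))"
    by (rule exI[of _ "max K1 K2"]) (simp add: K1 K2)
qed

lemma tends2_mix2: "tends2 p \<Longrightarrow> tends2 q \<Longrightarrow> tends2 (\<lambda>k. (snd (p k), snd (q k)))"
  unfolding tends2_def
proof
  fix N assume a: "\<forall>N. \<exists>K. \<forall>k\<ge>K. N \<le> fst (p k) \<and> N \<le> snd (p k)"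
    "\<forall>N. \<exists>K. \<forall>k\<ge>K. N \<le> fst (q k) \<and> N \<le> snd (q k)"
  obtain K1 where K1: "\<forall>k\<ge>K1. N \<le> snd (p k)" using a(1) by blast
  obtain K2 where K2: "\<forall>k\<ge>K2. N \<le> snd (q k)" using a(2) by blast
  show "\<exists>K. \<forall>k\<ge>K. N \<le> fst (snd (p k), snd (q k)) \<and> N \<le> snd (snd (p k), snd (q k))"
    by (rule exI[of _ "max K1 K2"]) (simp add: K1 K2)
qed

lemma filterlim_swap2:
  "filterlim (\<lambda>p. (snd p, fst p)) (sequentially \<times>\<^sub>F sequentially) (sequentially \<times>\<^sub>F sequentially)"
  unfolding filterlim_def le_filter_def eventually_filtermap eventually_prod_sequentially
  by (metis fst_conv snd_conv)

lemma iter_lim: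
  assumes XD: "\<And>n m. Dplus (X (n, m))" and LD: "Dplus L" and HD: "\<And>m. Dplus (Hm m)"
    and cX: "wconv X L (sequentially \<times>\<^sub>F sequentially)"
    and cH: "\<And>m. wconv (\<lambda>n. X (n, m)) (Hm m) sequentially"
  shows "wconv Hm L sequentially"
  unfolding wconv_def
proof (intro allI impI)
  fix t assume ct: "isCont (\<lambda>s. L (ereal s)) t"
  then have ctl: "((\<lambda>s. L (ereal s)) \<longlongrightarrow> L (ereal t)) (at t)" by (simp add: isCont_def)
  show "((\<lambda>m. Hm m (ereal t)) \<longlongrightarrow> L (ereal t)) sequentially"
  proof (rule order_tendstoI)
    fix c assume c: "c < L (ereal t)"
    obtain c' where c': "c < c'" "c' < L (ereal t)" using c dense by blast
    have "eventually (\<lambda>s. c' < L (ereal s)) (at t)" using order_tendstoD(1)[OF ctl c'(2)] .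
    then have "eventually (\<lambda>s. c' < L (ereal s)) (at_left t)"
      by (rule filter_leD[OF at_le, rotated]) simp
    then obtain b where b: "b < t" "\<And>z. b < z \<Longrightarrow> z < t \<Longrightarrow> c' < L (ereal z)"
      by (auto simp: eventually_at_left[of "t - 1" t])
    obtain t1 where t1: "b < t1" "t1 < t" "isCont (\<lambda>s. L (ereal s)) t1"
      using cpt2[OF dplusD(8)[OF LD] dplusD(8)[OF LD] b(1)] by blast
    have "((\<lambda>p. X p (ereal t1)) \<longlongrightarrow> L (ereal t1)) (sequentially \<times>\<^sub>F sequentially)"
      using cX t1(3) by (simp add: wconv_def)
    from order_tendstoD(1)[OF this b(2)[OF t1(1,2)]]
    obtain N where N: "\<And>m n. m \<ge> N \<Longrightarrow> n \<ge> N \<Longrightarrow> c' < X (n, m) (ereal t1)"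
      by (auto simp: eventually_prod_sequentially)
    show "eventually (\<lambda>m. c < Hm m (ereal t)) sequentially"
      unfolding eventually_sequentially
    proof (intro exI allI impI)
      fix m assume m: "N \<le> m"
      obtain s1 where s1: "t1 < s1" "s1 < t" "isCont (\<lambda>s. Hm m (ereal s)) s1"
        using cpt2[OF dplusD(8)[OF HD] dplusD(8)[OF HD] t1(2)] by blast
      have lim: "((\<lambda>n. X (n, m) (ereal s1)) \<longlongrightarrow> Hm m (ereal s1)) sequentially"
        using cH s1(3) by (simp add: wconv_def)
      have ev: "eventually (\<lambda>n. c' \<le> X (n, m) (ereal s1)) sequentially"
        unfolding eventually_sequentially
      proof (intro exI allI impI)
        fix n assume "N \<le> n"
        then have "c' < X (n, m) (ereal t1)" using N m by blast
        moreover have "X (n, m) (ereal t1) \<le> X (n, m) (ereal s1)"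
          using dplusD(1)[OF XD] s1(1) by (simp add: monoD)
        ultimately show "c' \<le> X (n, m) (ereal s1)" by simp
      qed
      have "c' \<le> Hm m (ereal s1)" by (rule tendsto_lowerbound[OF lim ev]) simp
      moreover have "Hm m (ereal s1) \<le> Hm m (ereal t)" using dplusD(1)[OF HD] s1(2) by (simp add: monoD)
      ultimately show "c < Hm m (ereal t)" using c' by simp
    qed
  next
    fix c assume c: "L (ereal t) < c"
    obtain c' where c': "c' < c" "L (ereal t) < c'" using c dense by blast
    have "eventually (\<lambda>s. L (ereal s) < c') (at t)" using order_tendstoD(2)[OF ctl c'(2)] .
    then have "eventually (\<lambda>s. L (ereal s) < c') (at_right t)"
      by (rule filter_leD[OF at_le, rotated]) simp
    then obtain b where b: "t < b" "\<And>z. t < z \<Longrightarrow> z < b \<Longrightarrow> L (ereal z) < c'"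
      by (auto simp: eventually_at_right[of t "t + 1"])
    obtain t2 where t2: "t < t2" "t2 < b" "isCont (\<lambda>s. L (ereal s)) t2"
      using cpt2[OF dplusD(8)[OF LD] dplusD(8)[OF LD] b(1)] by blast
    have "((\<lambda>p. X p (ereal t2)) \<longlongrightarrow> L (ereal t2)) (sequentially \<times>\<^sub>F sequentially)"
      using cX t2(3) by (simp add: wconv_def)
    from order_tendstoD(2)[OF this b(2)[OF t2(1,2)]]
    obtain N where N: "\<And>m n. m \<ge> N \<Longrightarrow> n \<ge> N \<Longrightarrow> X (n, m) (ereal t2) < c'"
      by (auto simp: eventually_prod_sequentially)
    show "eventually (\<lambda>m. Hm m (ereal t) < c) sequentially"
      unfolding eventually_sequentially
    proof (intro exI allI impI)
      fix m assume m: "N \<le> m"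
      obtain s2 where s2: "t < s2" "s2 < t2" "isCont (\<lambda>s. Hm m (ereal s)) s2"
        using cpt2[OF dplusD(8)[OF HD] dplusD(8)[OF HD] t2(1)] by blast
      have lim: "((\<lambda>n. X (n, m) (ereal s2)) \<longlongrightarrow> Hm m (ereal s2)) sequentially"
        using cH s2(3) by (simp add: wconv_def)
      have ev: "eventually (\<lambda>n. X (n, m) (ereal s2) \<le> c') sequentially"
        unfolding eventually_sequentially
      proof (intro exI allI impI)
        fix n assume "N \<le> n"
        then have "X (n, m) (ereal t2) < c'" using N m by blast
        moreover have "X (n, m) (ereal s2) \<le> X (n, m) (ereal t2)"
          using dplusD(1)[OF XD] s2(2) by (simp add: monoD)
        ultimately show "X (n, m) (ereal s2) \<le> c'" by simp
      qed
      have "Hm m (ereal s2) \<le> c'" by (rule tendsto_upperbound[OF lim ev]) simp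
      moreover have "Hm m (ereal t) \<le> Hm m (ereal s2)" using dplusD(1)[OF HD] s2(1) by (simp add: monoD)
      ultimately show "Hm m (ereal t) < c" using c' by simp
    qed
  qed
qed

lemma helly_dplus:
  fixes Fs :: "nat \<Rightarrow> dfun"
  assumes FD: "\<And>k. Dplus (Fs k)"
  shows "\<exists>r L. strict_mono r \<and> Dplus L \<and> wconv (\<lambda>k. Fs (r k)) L sequentially"
proof -
  define h where "h k x = - Fs k (ereal (- x))" for k x
  have rc: "continuous (at_right x) (h k)" for k x
  proof -
    have "((\<lambda>s. Fs k (ereal s)) \<longlongrightarrow> Fs k (ereal (- x))) (at_left (- x))"
      using dplusD(5)[OF FD] .
    then have "((\<lambda>s. Fs k (ereal s)) \<longlongrightarrow> Fs k (ereal (- x))) (filtermap (\<lambda>y. - y) (at_right x))"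
      using at_left_minus[of "- x"] by simp
    then have "((\<lambda>y. Fs k (ereal (- y))) \<longlongrightarrow> Fs k (ereal (- x))) (at_right x)"
      by (simp add: filterlim_filtermap)
    then have "(h k \<longlongrightarrow> h k x) (at_right x)"
      unfolding h_def by (intro tendsto_minus)
    then show ?thesis by (simp add: continuous_within)
  qed
  have mo: "mono (h k)" for k
    unfolding h_def mono_def using dplusD(1)[OF FD] by (auto simp: monoD)
  have bd: "\<bar>h k x\<bar> \<le> 1" for k x
    unfolding h_def using dplusD(2,3)[OF FD] by (simp add: abs_le_iff)
  obtain r F' where r: "strict_mono r" and F'rc: "\<forall>x. continuous (at_right x) F'" and F'm: "mono F'"
    and F'c: "\<forall>x. continuous (at x) F' \<longrightarrow> (\<lambda>n. h (r n) x) \<longlonglongrightarrow> F' x"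
    using Helly_selection[of h 1, OF rc mo bd] by blast
  define g where "g x = - F' (- x)" for x
  have gm: "mono g" unfolding g_def mono_def using F'm by (auto simp: monoD)
  have gc: "(\<lambda>n. Fs (r n) (ereal t)) \<longlonglongrightarrow> g t" if ct: "isCont g t" for t
  proof -
    have "isCont (\<lambda>y. - g (- y)) (- t)"
      by (rule continuous_intros isCont_o2[where f = uminus])+ (auto simp: ct intro: continuous_intros)
    moreover have "(\<lambda>y. - g (- y)) = F'" by (simp add: g_def)
    ultimately have "isCont F' (- t)" by simp
    then have "(\<lambda>n. h (r n) (- t)) \<longlonglongrightarrow> F' (- t)" using F'c by simp
    then have "(\<lambda>n. - h (r n) (- t)) \<longlonglongrightarrow> - F' (- t)" by (rule tendsto_minus)
    then show ?thesis by (simp add: h_def g_def)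
  qed
  have glc: "(g \<longlongrightarrow> g x) (at_left x)" for x
  proof -
    have "(F' \<longlongrightarrow> F' (- x)) (at_right (- x))" using F'rc by (simp add: continuous_within)
    then have "(F' \<longlongrightarrow> F' (- x)) (filtermap (\<lambda>y. - y) (at_left x))"
      using at_right_minus[of "- x"] by simp
    then have "((\<lambda>y. F' (- y)) \<longlongrightarrow> F' (- x)) (at_left x)"
      by (simp add: filterlim_filtermap)
    then show ?thesis unfolding g_def by (intro tendsto_minus)
  qed
  have cp: "\<exists>s. a < s \<and> s < b \<and> isCont g s" if "a < b" for a b
    using cpt2[OF gm gm that] by blast
  have g0: "0 \<le> g x" for x
  proof -
    obtain s where s: "x - 1 < s" "s < x" "isCont g s" using cp[of "x - 1" x] by auto
    have "0 \<le> g s" by (rule tendsto_lowerbound[OF gc[OF s(3)]]) (auto simp: dplusD(2)[OF FD])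
    also have "g s \<le> g x" using gm s by (simp add: monoD)
    finally show ?thesis .
  qed
  have g1: "g x \<le> 1" for x
  proof -
    obtain s where s: "x < s" "s < x + 1" "isCont g s" using cp[of x "x + 1"] by auto
    have "g x \<le> g s" using gm s by (simp add: monoD)
    also have "g s \<le> 1" by (rule tendsto_upperbound[OF gc[OF s(3)]]) (auto simp: dplusD(3)[OF FD])
    finally show ?thesis .
  qed
  have gneg: "g x = 0" if xn: "x < 0" for x
  proof -
    obtain s where s: "x < s" "s < 0" "isCont g s" using cp[of x 0] xn by blast
    have "(\<lambda>n. Fs (r n) (ereal s)) \<longlonglongrightarrow> 0"
      using s(2) by (simp add: dplusD(4)[OF FD])
    with gc[OF s(3)] have "g s = 0" using LIMSEQ_unique by blast
    moreover have "g x \<le> g s" using gm s by (simp add: monoD)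
    ultimately show ?thesis using g0[of x] by simp
  qed
  have gz: "g 0 = 0"
  proof -
    have "eventually (\<lambda>s. s \<in> {-1<..<0}) (at_left (0::real))" by (rule eventually_at_left_real) simp
    then have "eventually (\<lambda>s. g s = 0) (at_left (0::real))"
      by (rule eventually_mono) (auto simp: gneg)
    then have "(g \<longlongrightarrow> 0) (at_left (0::real))" by (rule tendsto_eventually)
    from tendsto_unique[OF _ glc[of 0] this] show ?thesis by simp
  qed
  define L where "L t = (case t of ereal x \<Rightarrow> g x | PInfty \<Rightarrow> 1 | MInfty \<Rightarrow> 0)" for t
  have Lr: "(\<lambda>s. L (ereal s)) = g" by (simp add: L_def)
  have Lm: "mono L"
    unfolding mono_def
  proof (intro allI impI)
    fix x y :: ereal assume "x \<le> y"
    then show "L x \<le> L y"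
      by (cases x; cases y) (auto simp: L_def g0 g1 gm monoD)
  qed
  have LD: "Dplus L"
    unfolding Dplus_def distfun_def
  proof (intro conjI allI)
    show "mono L" by (rule Lm)
    fix t show "0 \<le> L t" "L t \<le> 1" by (cases t; simp add: L_def g0 g1)+
  next
    fix x :: real show "((\<lambda>s. L (ereal s)) \<longlongrightarrow> L (ereal x)) (at_left x)"
      unfolding Lr using glc by (simp add: L_def)
  qed (auto simp: L_def zero_ereal_def gz)
  have "wconv (\<lambda>k. Fs (r k)) L sequentially"
    unfolding wconv_def Lr using gc by (simp add: L_def)
  with r LD show ?thesis by blast
qed

lemma exists_lim2:
  fixes X :: "nat \<times> nat \<Rightarrow> dfun"
  assumes XD: "\<And>p. Dplus (X p)"
    and cmp: "\<And>p q L1 L2. tends2 p \<Longrightarrow> tends2 q \<Longrightarrow> Dplus L1 \<Longrightarrow> Dplus L2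
      \<Longrightarrow> wconv (\<lambda>k. X (p k)) L1 sequentially \<Longrightarrow> wconv (\<lambda>k. X (q k)) L2 sequentially \<Longrightarrow> L1 \<le> L2"
  shows "\<exists>L. Dplus L \<and> wconv X L (sequentially \<times>\<^sub>F sequentially)"
proof -
  obtain r L where r: "strict_mono r" and LD: "Dplus L"
    and cL: "wconv (\<lambda>k. X (r k, r k)) L sequentially"
    using helly_dplus[of "\<lambda>k. X (k, k)"] XD by blast
  have p0: "tends2 (\<lambda>k. (r k, r k))" by (rule tends2_diag[OF r])
  have "wconv X L (sequentially \<times>\<^sub>F sequentially)"
    unfolding wconv_def
  proof (intro allI impI)
    fix t assume ct: "isCont (\<lambda>s. L (ereal s)) t"
    show "((\<lambda>p. X p (ereal t)) \<longlongrightarrow> L (ereal t)) (sequentially \<times>\<^sub>F sequentially)"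
    proof (rule ccontr)
      assume "\<not> ?thesis"
      then obtain e where e: "e > 0"
        and ne: "\<not> eventually (\<lambda>p. dist (X p (ereal t)) (L (ereal t)) < e) (sequentially \<times>\<^sub>F sequentially)"
        by (auto simp: tendsto_iff)
      have "\<forall>N. \<exists>q. N \<le> fst q \<and> N \<le> snd q \<and> \<not> dist (X q (ereal t)) (L (ereal t)) < e"
      proof
        fix N
        from ne have "\<not> (\<forall>m\<ge>N. \<forall>n\<ge>N. dist (X (n, m) (ereal t)) (L (ereal t)) < e)"
          unfolding eventually_prod_sequentially by blast
        then show "\<exists>q. N \<le> fst q \<and> N \<le> snd q \<and> \<not> dist (X q (ereal t)) (L (ereal t)) < e"
          by (metis fst_conv snd_conv)
      qed
      then obtain q where q: "\<And>N. N \<le> fst (q N) \<and> N \<le> snd (q N) \<and> \<not> dist (X (q N) (ereal t)) (L (ereal t)) < e"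
        by metis
      have tq: "tends2 q" unfolding tends2_def using q order_trans by blast
      obtain r' L' where r': "strict_mono r'" and L'D: "Dplus L'"
        and cL': "wconv (\<lambda>k. X (q (r' k))) L' sequentially"
        using helly_dplus[of "\<lambda>k. X (q k)"] XD by blast
      have tq': "tends2 (\<lambda>k. q (r' k))" by (rule tends2_subseq[OF tq r'])
      have "L' \<le> L" by (rule cmp[OF tq' p0 L'D LD cL' cL])
      moreover have "L \<le> L'" by (rule cmp[OF p0 tq' LD L'D cL cL'])
      ultimately have "L' = L" by simp
      with cL' ct have "(\<lambda>k. X (q (r' k)) (ereal t)) \<longlonglongrightarrow> L (ereal t)"
        by (simp add: wconv_def)
      then have "eventually (\<lambda>k. dist (X (q (r' k)) (ereal t)) (L (ereal t)) < e) sequentially"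
        using e by (simp add: tendsto_iff)
      then obtain k where "dist (X (q (r' k)) (ereal t)) (L (ereal t)) < e"
        by (auto simp: eventually_sequentially)
      with q show False by blast
    qed
  qed
  with LD show ?thesis by blast
qed

lemma tfD:
  assumes "triangle_function star"
  shows "\<And>F L. Dplus F \<Longrightarrow> Dplus L \<Longrightarrow> Dplus (star F L)"
    and "\<And>F L. Dplus F \<Longrightarrow> Dplus L \<Longrightarrow> star F L = star L F"
    and "\<And>F F' L. Dplus F \<Longrightarrow> Dplus F' \<Longrightarrow> Dplus L \<Longrightarrow> F \<le> F' \<Longrightarrow> star F L \<le> star F' L"
    and "\<And>F. Dplus F \<Longrightarrow> star F H0 = F"
proof -
  note T = assms[unfolded triangle_function_def]
  show "\<And>F L. Dplus F \<Longrightarrow> Dplus L \<Longrightarrow> Dplus (star F L)" using T by simp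
  show "\<And>F L. Dplus F \<Longrightarrow> Dplus L \<Longrightarrow> star F L = star L F" using T by simp
  show "\<And>F F' L. Dplus F \<Longrightarrow> Dplus F' \<Longrightarrow> Dplus L \<Longrightarrow> F \<le> F' \<Longrightarrow> star F L \<le> star F' L"
    using T by simp
  show "\<And>F. Dplus F \<Longrightarrow> star F H0 = F" using T by simp
qed

lemma tf_mono2:
  assumes "triangle_function star" "Dplus F" "Dplus L" "Dplus L'" "L \<le> L'"
  shows "star F L \<le> star F L'"
proof -
  have "star F L = star L F" by (rule tfD(2)[OF assms(1) assms(2,3)])
  also have "\<dots> \<le> star L' F" by (rule tfD(3)[OF assms(1) assms(3,4,2,5)])
  also have "\<dots> = star F L'" by (rule tfD(2)[OF assms(1) assms(4,2)])
  finally show ?thesis .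
qed

lemma tf_unitl:
  assumes "triangle_function star" "Dplus F" shows "star H0 F = F"
  using tfD(2)[OF assms(1) Dplus_H0 assms(2)] tfD(4)[OF assms(1) assms(2)] by simp

lemma contD:
  assumes "continuous_tf star" "\<And>n. Dplus (Fs n)" "\<And>n. Dplus (Ls n)" "Dplus F" "Dplus L"
    "wconv Fs F sequentially" "wconv Ls L sequentially"
  shows "wconv (\<lambda>n. star (Fs n) (Ls n)) (star F L) sequentially"
  using assms(1)[unfolded continuous_tf_def, rule_format, of Fs Ls F L] assms(2-7) by simp

lemma pmsD:
  assumes "pms G D star"
  shows "triangle_function star" "\<And>p q. p \<in> G \<Longrightarrow> q \<in> G \<Longrightarrow> Dplus (D p q)"
    "\<And>p q. p \<in> G \<Longrightarrow> q \<in> G \<Longrightarrow> D p q = D q p"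
    "\<And>p q r. p \<in> G \<Longrightarrow> q \<in> G \<Longrightarrow> r \<in> G \<Longrightarrow> star (D p q) (D q r) \<le> D p r"
  using assms unfolding pms_def by simp_all

lemma is_Dsup_unique: "is_Dsup S L \<Longrightarrow> is_Dsup S L' \<Longrightarrow> L = L'"
  unfolding is_Dsup_def by (simp add: antisym)

lemma wconv_const: "wconv (\<lambda>_. U) U net"
  unfolding wconv_def by simp

lemma main_fixed:
  fixes G :: "'a set" and D :: "'a \<Rightarrow> 'a \<Rightarrow> dfun" and star :: "dfun \<Rightarrow> dfun \<Rightarrow> dfun"
    and f g :: "'a \<Rightarrow> dfun" and a b :: "nat \<Rightarrow> 'a"
  assumes P: "pms G D star" and CT: "continuous_tf star"
    and Pf: "PiG G D star f" and Pg: "PiG G D star g"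
    and ca: "pm_cauchy G D a" and cb: "pm_cauchy G D b"
    and fa: "\<forall>x\<in>G. wconv (\<lambda>n. D (a n) x) (f x) sequentially"
    and gb: "\<forall>x\<in>G. wconv (\<lambda>n. D (b n) x) (g x) sequentially"
  shows "\<exists>L. is_Dsup {star (f x) (g x) | x. x \<in> G} L \<and>
        wconv (\<lambda>(n, m). D (a n) (b m)) L (sequentially \<times>\<^sub>F sequentially)
        \<and> wconv (\<lambda>n. D (a n) (b n)) L sequentially
        \<and> wconv (\<lambda>m. f (b m)) L sequentially
        \<and> wconv (\<lambda>n. g (a n)) L sequentially"
proof -
  have TF: "triangle_function star" by (rule pmsD(1)[OF P])
  have aG: "\<And>n. a n \<in> G" using ca by (simp add: pm_cauchy_def)
  have bG: "\<And>n. b n \<in> G" using cb by (simp add: pm_cauchy_def)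
  have DD: "\<And>p q. p \<in> G \<Longrightarrow> q \<in> G \<Longrightarrow> Dplus (D p q)" by (rule pmsD(2)[OF P])
  have fD: "\<And>x. x \<in> G \<Longrightarrow> Dplus (f x)" using Pf by (simp add: PiG_def prob_lip1_def)
  have gD: "\<And>x. x \<in> G \<Longrightarrow> Dplus (g x)" using Pg by (simp add: PiG_def prob_lip1_def)
  have ca': "wconv (\<lambda>p. D (a (fst p)) (a (snd p))) H0 (sequentially \<times>\<^sub>F sequentially)"
  proof -
    have "(\<lambda>(n, p). D (a n) (a p)) = (\<lambda>p. D (a (fst p)) (a (snd p)))" by (auto simp: fun_eq_iff)
    then show ?thesis using ca by (simp add: pm_cauchy_def)
  qed
  have cb': "wconv (\<lambda>p. D (b (fst p)) (b (snd p))) H0 (sequentially \<times>\<^sub>F sequentially)"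
  proof -
    have "(\<lambda>(n, p). D (b n) (b p)) = (\<lambda>p. D (b (fst p)) (b (snd p)))" by (auto simp: fun_eq_iff)
    then show ?thesis using cb by (simp add: pm_cauchy_def)
  qed
  define X where "X p = D (a (fst p)) (b (snd p))" for p
  have XD: "\<And>p. Dplus (X p)" unfolding X_def using DD aG bG by blast
  have cmp: "L1 \<le> L2" if tp: "tends2 p" and tq: "tends2 q" and L1D: "Dplus L1" and L2D: "Dplus L2"
    and c1: "wconv (\<lambda>k. X (p k)) L1 sequentially" and c2: "wconv (\<lambda>k. X (q k)) L2 sequentially" for p q L1 L2
  proof -
    define A where "A k = D (a (fst (q k))) (a (fst (p k)))" for k
    define B where "B k = D (b (snd (p k))) (b (snd (q k)))" for k
    have cA: "wconv A H0 sequentially"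
      using wconv_compose[OF ca' tends2_filterlim[OF tends2_mix[OF tq tp]]] by (simp add: A_def[abs_def])
    have cB: "wconv B H0 sequentially"
      using wconv_compose[OF cb' tends2_filterlim[OF tends2_mix2[OF tp tq]]] by (simp add: B_def[abs_def])
    have AD: "\<And>k. Dplus (A k)" unfolding A_def using DD aG by blast
    have BD: "\<And>k. Dplus (B k)" unfolding B_def using DD bG by blast
    have cC: "wconv (\<lambda>k. star (X (p k)) (B k)) (star L1 H0) sequentially"
      by (rule contD[OF CT XD BD L1D Dplus_H0 c1 cB])
    then have cC': "wconv (\<lambda>k. star (X (p k)) (B k)) L1 sequentially"
      using tfD(4)[OF TF L1D] by simp
    have CD: "\<And>k. Dplus (star (X (p k)) (B k))" using tfD(1)[OF TF XD BD] .
    have cE: "wconv (\<lambda>k. star (A k) (star (X (p k)) (B k))) (star H0 L1) sequentially"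
      by (rule contD[OF CT AD CD Dplus_H0 L1D cA cC'])
    then have cE': "wconv (\<lambda>k. star (A k) (star (X (p k)) (B k))) L1 sequentially"
      using tf_unitl[OF TF L1D] by simp
    have le: "star (A k) (star (X (p k)) (B k)) \<le> X (q k)" for k
    proof -
      let ?n = "fst (p k)" and ?m = "snd (p k)" and ?n' = "fst (q k)" and ?m' = "snd (q k)"
      have "star (X (p k)) (B k) \<le> D (a ?n) (b ?m')"
        unfolding X_def B_def by (rule pmsD(4)[OF P aG bG bG])
      then have "star (A k) (star (X (p k)) (B k)) \<le> star (A k) (D (a ?n) (b ?m'))"
        by (intro tf_mono2[OF TF AD CD]) (auto intro: DD aG bG)
      also have "\<dots> \<le> D (a ?n') (b ?m')"
        unfolding A_def by (rule pmsD(4)[OF P aG aG bG])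
      finally show ?thesis by (simp add: X_def)
    qed
    show ?thesis by (rule wconv_le[OF L1D L2D cE' c2 _ le]) simp
  qed
  obtain L where LD: "Dplus L" and cX: "wconv X L (sequentially \<times>\<^sub>F sequentially)"
  proof -
    have "\<exists>L. Dplus L \<and> wconv X L (sequentially \<times>\<^sub>F sequentially)"
    proof (rule exists_lim2[of X, OF XD])
      fix p q L1 L2 assume "tends2 p" "tends2 q" "Dplus L1" "Dplus L2"
        "wconv (\<lambda>k. X (p k)) L1 sequentially" "wconv (\<lambda>k. X (q k)) L2 sequentially"
      then show "L1 \<le> L2" by (rule cmp)
    qed
    then show ?thesis using that by blast
  qed
  have X_eq: "(\<lambda>(n, m). D (a n) (b m)) = X" by (auto simp: X_def fun_eq_iff)
  have c1: "wconv (\<lambda>(n, m). D (a n) (b m)) L (sequentially \<times>\<^sub>F sequentially)"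
    using cX X_eq by simp
  have c2: "wconv (\<lambda>n. D (a n) (b n)) L sequentially"
    using wconv_compose[OF cX tends2_filterlim[OF tends2_diag0]] by (simp add: X_def)
  have c3: "wconv (\<lambda>m. f (b m)) L sequentially"
    by (rule iter_lim[where X = X, OF XD LD fD[OF bG] cX]) (use fa bG in \<open>simp add: X_def\<close>)
  have c4: "wconv (\<lambda>n. g (a n)) L sequentially"
  proof (rule iter_lim[where X = "\<lambda>p. X (snd p, fst p)", OF XD LD gD[OF aG]])
    show "wconv (\<lambda>p. X (snd p, fst p)) L (sequentially \<times>\<^sub>F sequentially)"
      using wconv_compose[OF cX filterlim_swap2] by simp
    fix m
    have "(\<lambda>n. X (snd (n, m), fst (n, m))) = (\<lambda>n. D (b n) (a m))"
      using pmsD(3)[OF P aG bG] by (simp add: X_def fun_eq_iff)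
    then show "wconv (\<lambda>n. X (snd (n, m), fst (n, m))) (g (a m)) sequentially"
      using gb aG by simp
  qed
  have ub: "star (f x) (g x) \<le> L" if xG: "x \<in> G" for x
  proof -
    have cg: "wconv (\<lambda>n. D x (b n)) (g x) sequentially"
      using gb xG pmsD(3)[OF P xG bG] by simp
    have "wconv (\<lambda>n. star (D (a n) x) (D x (b n))) (star (f x) (g x)) sequentially"
      by (rule contD[OF CT _ _ fD[OF xG] gD[OF xG]]) (use fa xG cg DD aG bG in auto)
    moreover have "\<And>n. star (D (a n) x) (D x (b n)) \<le> D (a n) (b n)"
      by (rule pmsD(4)[OF P aG xG bG])
    ultimately show ?thesis
      using wconv_le[OF tfD(1)[OF TF fD[OF xG] gD[OF xG]] LD _ c2] by simp
  qed
  have lub: "L \<le> U" if UD: "Dplus U" and Ub: "\<forall>F\<in>{star (f x) (g x) | x. x \<in> G}. F \<le> U" for U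
  proof -
    have cgb: "wconv (\<lambda>m. g (b m)) H0 sequentially"
      by (rule iter_lim[where X = "\<lambda>p. D (b (fst p)) (b (snd p))", OF _ Dplus_H0 gD[OF bG] cb'])
        (use DD bG gb in auto)
    have "wconv (\<lambda>m. star (f (b m)) (g (b m))) (star L H0) sequentially"
      by (rule contD[OF CT fD[OF bG] gD[OF bG] LD Dplus_H0 c3 cgb])
    then have cc: "wconv (\<lambda>m. star (f (b m)) (g (b m))) L sequentially"
      using tfD(4)[OF TF LD] by simp
    have "\<And>m. star (f (b m)) (g (b m)) \<le> U" using Ub bG by blast
    then show ?thesis using wconv_le[OF LD UD cc wconv_const] by simp
  qed
  have "is_Dsup {star (f x) (g x) | x. x \<in> G} L"
    unfolding is_Dsup_def using LD ub lub by blast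
  with c1 c2 c3 c4 show ?thesis by blast
qed

theorem mainTheorem10:
  fixes G :: "'a set" and D :: "'a \<Rightarrow> 'a \<Rightarrow> dfun" and star :: "dfun \<Rightarrow> dfun \<Rightarrow> dfun"
    and f g :: "'a \<Rightarrow> dfun"
  assumes "pms G D star" and "continuous_tf star"
    and "PiG G D star f" and "PiG G D star g"
  shows "\<exists>L. is_Dsup {star (f x) (g x) | x. x \<in> G} L \<and>
     (\<forall>a b. pm_cauchy G D a \<and> pm_cauchy G D b
        \<and> (\<forall>x\<in>G. wconv (\<lambda>n. D (a n) x) (f x) sequentially)
        \<and> (\<forall>x\<in>G. wconv (\<lambda>n. D (b n) x) (g x) sequentially)
      \<longrightarrow> wconv (\<lambda>(n, m). D (a n) (b m)) L (sequentially \<times>\<^sub>F sequentially)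
        \<and> wconv (\<lambda>n. D (a n) (b n)) L sequentially
        \<and> wconv (\<lambda>m. f (b m)) L sequentially
        \<and> wconv (\<lambda>n. g (a n)) L sequentially)"
proof -
  obtain a0 where a0: "pm_cauchy G D a0" "\<forall>x\<in>G. wconv (\<lambda>n. D (a0 n) x) (f x) sequentially"
    using assms(3) by (auto simp: PiG_def)
  obtain b0 where b0: "pm_cauchy G D b0" "\<forall>x\<in>G. wconv (\<lambda>n. D (b0 n) x) (g x) sequentially"
    using assms(4) by (auto simp: PiG_def)
  obtain L where L: "is_Dsup {star (f x) (g x) | x. x \<in> G} L"
    using main_fixed[OF assms a0(1) b0(1) a0(2) b0(2)] by blast
  show ?thesis
  proof (intro exI conjI allI impI)
    show "is_Dsup {star (f x) (g x) | x. x \<in> G} L" by (rule L)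
    fix a b assume ab: "pm_cauchy G D a \<and> pm_cauchy G D b
        \<and> (\<forall>x\<in>G. wconv (\<lambda>n. D (a n) x) (f x) sequentially)
        \<and> (\<forall>x\<in>G. wconv (\<lambda>n. D (b n) x) (g x) sequentially)"
    then obtain L' where L': "is_Dsup {star (f x) (g x) | x. x \<in> G} L'"
      and r: "wconv (\<lambda>(n, m). D (a n) (b m)) L' (sequentially \<times>\<^sub>F sequentially)"
        "wconv (\<lambda>n. D (a n) (b n)) L' sequentially"
        "wconv (\<lambda>m. f (b m)) L' sequentially"
        "wconv (\<lambda>n. g (a n)) L' sequentially"
      using main_fixed[OF assms, of a b] by blast
    have "L' = L" using is_Dsup_unique[OF L' L] .
    with r show "wconv (\<lambda>(n, m). D (a n) (b m)) L (sequentially \<times>\<^sub>F sequentially)"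
        "wconv (\<lambda>n. D (a n) (b n)) L sequentially"
        "wconv (\<lambda>m. f (b m)) L sequentially"
        "wconv (\<lambda>n. g (a n)) L sequentially" by simp_all
  qed
qed

end
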